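(* Let $G$ and $H$ be two nontrivial connected graphs and let $S\subseteq V(G)$ and $T\subseteq V(H)$ be cycle convex sets in $G$ and $H$ respectively. Then $S\times T$ is cycle convex in $G\Box H$.
   Context: All graphs are finite, simple and undirected. For a graph $G$ and $S\subseteq V(G)$, the cycle interval $\langle S\rangle$ consists of the vertices of $S$ together with every vertex $w\in V(G)\setminus S$ such that $G[S\cup\{w\}]$ contains a cycle through $w$; $S$ is cycle convex if $\langle S\rangle=S$. The Cartesian product $G\Box H$ has vertex set $V(G)\times V(H)$, with $(g_1,h_1)\sim(g_2,h_2)$ iff ($g_1\sim g_2$ and $h_1=h_2$) or ($g_1=g_2$ and $h_1\sim h_2$). A graph is nontrivial if it has at least two vertices. *)

theory Defs
  imports Main
begin

definition simple_graph :: "'a set \<Rightarrow> ('a \<Rightarrow> 'a \<Rightarrow> bool) \<Rightarrow> bool" where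
  "simple_graph V E \<longleftrightarrow> finite V \<and> (\<forall>x y. E x y \<longrightarrow> x \<in> V \<and> y \<in> V)
     \<and> (\<forall>x y. E x y \<longrightarrow> E y x) \<and> (\<forall>x. \<not> E x x)"

definition connected_graph :: "'a set \<Rightarrow> ('a \<Rightarrow> 'a \<Rightarrow> bool) \<Rightarrow> bool" where
  "connected_graph V E \<longleftrightarrow> (\<forall>x\<in>V. \<forall>y\<in>V. E\<^sup>*\<^sup>* x y)"

definition nontrivial_graph :: "'a set \<Rightarrow> bool" where
  "nontrivial_graph V \<longleftrightarrow> (\<exists>x\<in>V. \<exists>y\<in>V. x \<noteq> y)"

definition cycle_in :: "('a \<Rightarrow> 'a \<Rightarrow> bool) \<Rightarrow> 'a set \<Rightarrow> 'a list \<Rightarrow> bool" where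
  "cycle_in E A xs \<longleftrightarrow> distinct xs \<and> length xs \<ge> 3 \<and> set xs \<subseteq> A
     \<and> (\<forall>i < length xs. E (xs ! i) (xs ! ((i + 1) mod length xs)))"

definition cycle_interval :: "'a set \<Rightarrow> ('a \<Rightarrow> 'a \<Rightarrow> bool) \<Rightarrow> 'a set \<Rightarrow> 'a set" where
  "cycle_interval V E S = S \<union> {w \<in> V - S. \<exists>xs. cycle_in E (S \<union> {w}) xs \<and> w \<in> set xs}"

definition cycle_convex :: "'a set \<Rightarrow> ('a \<Rightarrow> 'a \<Rightarrow> bool) \<Rightarrow> 'a set \<Rightarrow> bool" where
  "cycle_convex V E S \<longleftrightarrow> cycle_interval V E S = S"

definition box_vertices :: "'a set \<Rightarrow> 'b set \<Rightarrow> ('a \<times> 'b) set" where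
  "box_vertices V W = V \<times> W"

definition box_edge :: "('a \<Rightarrow> 'a \<Rightarrow> bool) \<Rightarrow> ('b \<Rightarrow> 'b \<Rightarrow> bool) \<Rightarrow> 'a \<times> 'b \<Rightarrow> 'a \<times> 'b \<Rightarrow> bool" where
  "box_edge E F p q \<longleftrightarrow> (E (fst p) (fst q) \<and> snd p = snd q) \<or> (fst p = fst q \<and> F (snd p) (snd q))"

end

theory Submission
  imports Defs
begin

lemma path_exists:
  assumes "R\<^sup>*\<^sup>* a b" and "a \<in> A" and "\<And>x y. R x y \<Longrightarrow> y \<in> A"
  shows "\<exists>p. p \<noteq> [] \<and> hd p = a \<and> last p = b \<and> distinct p \<and> set p \<subseteq> A
     \<and> (\<forall>i. Suc i < length p \<longrightarrow> R (p!i) (p!Suc i))"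
  using assms(1)
proof (induction rule: rtranclp_induct)
  case base
  show ?case using assms(2) by (intro exI[of _ "[a]"]) auto
next
  case (step y z)
  then obtain p where p: "p \<noteq> []" "hd p = a" "last p = y" "distinct p" "set p \<subseteq> A"
    "\<forall>i. Suc i < length p \<longrightarrow> R (p!i) (p!Suc i)" by blast
  show ?case
  proof (cases "z \<in> set p")
    case True
    then obtain i where i: "i < length p" "p!i = z" by (auto simp: in_set_conv_nth)
    define q where "q = take (Suc i) p"
    have "q \<noteq> []" using p(1) q_def by simp
    moreover have "hd q = a" using p(1,2) q_def by (simp add: hd_take)
    moreover have "last q = z" using i q_def by (simp add: take_Suc_conv_app_nth)
    moreover have "distinct q" using p(4) q_def by simp
    moreover have "set q \<subseteq> A" using p(5) q_def set_take_subset by fastforce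
    moreover have "\<forall>j. Suc j < length q \<longrightarrow> R (q!j) (q!Suc j)" using p(6) q_def by simp
    ultimately show ?thesis by blast
  next
    case False
    define q where "q = p @ [z]"
    have "q \<noteq> []" using q_def by simp
    moreover have "hd q = a" using p(1,2) q_def by simp
    moreover have "last q = z" using q_def by simp
    moreover have "distinct q" using p(4) False q_def by simp
    moreover have "set q \<subseteq> A" using p(5) q_def step(2) assms(3) by auto
    moreover have "\<forall>j. Suc j < length q \<longrightarrow> R (q!j) (q!Suc j)"
    proof (intro allI impI)
      fix j assume j: "Suc j < length q"
      show "R (q!j) (q!Suc j)"
      proof (cases "Suc j < length p")
        case True thus ?thesis using p(6) q_def by (simp add: nth_append)
      next
        case False
        hence "j = length p - 1" "Suc j = length p" using j q_def by auto
        thus ?thesis using q_def p(1,3) step(2) by (simp add: nth_append last_conv_nth)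
      qed
    qed
    ultimately show ?thesis by blast
  qed
qed

lemma mod_inj_aux:
  fixes n k i j :: nat
  assumes "i < n" "j < n" "(k + i) mod n = (k + j) mod n"
  shows "i = j"
proof -
  have h: "a = b" if "a \<le> b" "b < n" "(k + a) mod n = (k + b) mod n" for a b
  proof -
    have "n dvd (k + b) - (k + a)" using that mod_eq_dvd_iff_nat[of "k+a" "k+b" n] by simp
    hence "n dvd b - a" by simp
    moreover have "b - a < n" using that by simp
    ultimately have "b - a = 0" using dvd_imp_le by (metis gr0I nat_dvd_not_less)
    thus ?thesis using that by simp
  qed
  show ?thesis using h[of i j] h[of j i] assms by (cases "i \<le> j") auto
qed
lemma cycle_from_path:
  assumes cvx: "cycle_convex VG EG S" and g: "g \<in> VG" "g \<notin> S"
    and a: "a \<in> S" and ab: "a \<noteq> b" and ga: "EG g a" and bg: "EG b g"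
    and w: "(\<lambda>x y. EG x y \<and> x \<in> S \<and> y \<in> S)\<^sup>*\<^sup>* a b"
  shows False
proof -
  obtain p where p: "p \<noteq> []" "hd p = a" "last p = b" "distinct p" "set p \<subseteq> S"
     "\<forall>i. Suc i < length p \<longrightarrow> EG (p!i) (p!Suc i)"
    using path_exists[OF w a, of ] by blast
  have lp: "length p \<ge> 2"
  proof (rule ccontr)
    assume "\<not> ?thesis"
    with p(1) have "length p = 1" by (cases p) (auto simp: not_less_eq_eq)
    then obtain x where "p = [x]" by (cases p) auto
    thus False using p ab by simp
  qed
  define c where "c = g # p"
  have "cycle_in EG (S \<union> {g}) c"
    unfolding cycle_in_def
  proof (intro conjI allI impI)
    show "distinct c" using c_def p g by auto
    show "3 \<le> length c" using c_def lp by simp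
    show "set c \<subseteq> S \<union> {g}" using c_def p by auto
    fix i assume i: "i < length c"
    show "EG (c ! i) (c ! ((i + 1) mod length c))"
    proof (cases "i = length p")
      case True
      hence "(i+1) mod length c = 0" using c_def by simp
      moreover have "c ! i = b" using True c_def p(1,3) by (simp add: last_conv_nth)
      ultimately show ?thesis using bg c_def by simp
    next
      case False
      hence i2: "i + 1 < length c" using i c_def by simp
      show ?thesis
      proof (cases i)
        case 0
        then show ?thesis using i2 c_def p(1,2) ga by (simp add: hd_conv_nth)
      next
        case (Suc j)
        then show ?thesis using i2 c_def p(6) by simp
      qed
    qed
  qed
  hence "g \<in> cycle_interval VG EG S" unfolding cycle_interval_def using g c_def by auto
  thus False using cvx g unfolding cycle_convex_def by simp
qed

lemma core:
  assumes cvx: "cycle_convex VG EG S" and g: "fst w \<in> VG" "fst w \<notin> S"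
    and cyc: "cycle_in (box_edge EG EH) (S \<times> T \<union> {w}) xs" and win: "w \<in> set xs"
  shows False
proof -
  define n where "n = length xs"
  obtain k where k: "k < n" "xs ! k = w" using win n_def by (auto simp: in_set_conv_nth)
  define v where "v j = xs ! ((k + j) mod n)" for j
  have n3: "n \<ge> 3" and dist: "distinct xs" and sub: "set xs \<subseteq> S \<times> T \<union> {w}"
    and ed: "\<forall>i<n. box_edge EG EH (xs ! i) (xs ! ((i + 1) mod n))"
    using cyc unfolding cycle_in_def n_def by auto
  have n0: "0 < n" using n3 by simp
  have md: "m mod n < n" for m using mod_less_divisor[OF n0] .
  have v0: "v 0 = w" "v n = w" using k v_def by auto
  have vinj: "i = j" if "i < n" "j < n" "v i = v j" for i j
  proof -
    have "(k + i) mod n = (k + j) mod n"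
    proof -
      have "xs!((k+i) mod n) = xs!((k+j) mod n)" using that(3) v_def by simp
      moreover have "(k+i) mod n < length xs" "(k+j) mod n < length xs" using md n_def by auto
      ultimately show ?thesis using nth_eq_iff_index_eq[OF dist] by blast
    qed
    thus ?thesis using mod_inj_aux that by blast
  qed
  have vST: "v j \<in> S \<times> T" if "0 < j" "j < n" for j
  proof -
    have "v j \<noteq> w" using vinj[of j 0] v0 that by auto
    moreover have "v j \<in> set xs" using v_def n_def md by simp
    ultimately show ?thesis using sub by auto
  qed
  have vE: "box_edge EG EH (v j) (v (Suc j))" for j
  proof -
    have "(k + j) mod n < n" using md by simp
    hence "box_edge EG EH (xs ! ((k + j) mod n)) (xs ! (((k + j) mod n + 1) mod n))" using ed by blast
    thus ?thesis unfolding v_def by (simp add: mod_Suc_eq)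
  qed
  define R where "R = (\<lambda>x y. EG x y \<and> x \<in> S \<and> y \<in> S)"
  have walk: "R\<^sup>*\<^sup>* (fst (v 1)) (fst (v (Suc j)))" if "Suc j < n" for j
    using that
  proof (induction j)
    case 0 then show ?case by simp
  next
    case (Suc j)
    have a: "v (Suc j) \<in> S \<times> T" "v (Suc (Suc j)) \<in> S \<times> T" using vST Suc.prems by auto
    have "R\<^sup>*\<^sup>* (fst (v (Suc j))) (fst (v (Suc (Suc j))))"
      using vE[of "Suc j"] a unfolding box_edge_def R_def by auto
    thus ?case using Suc by (meson Suc_lessD rtranclp_trans)
  qed
  have v1: "v 1 \<in> S \<times> T" and vl: "v (n - 1) \<in> S \<times> T" using vST n3 by auto
  have e1: "EG (fst w) (fst (v 1)) \<and> snd w = snd (v 1)"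
    using vE[of 0] v0 v1 g unfolding box_edge_def by auto
  have "Suc (n - 1) = n" using n3 by simp
  hence e2: "EG (fst (v (n - 1))) (fst w) \<and> snd w = snd (v (n - 1))"
    using vE[of "n - 1"] v0 vl g unfolding box_edge_def by auto
  have ne: "fst (v 1) \<noteq> fst (v (n - 1))"
  proof
    assume "fst (v 1) = fst (v (n - 1))"
    hence "v 1 = v (n - 1)" using e1 e2 by (simp add: prod_eq_iff)
    moreover have "1 < n" "n - 1 < n" using n3 by auto
    ultimately have "1 = n - 1" using vinj by blast
    thus False using n3 by simp
  qed
  have n2: "Suc (n - 2) = n - 1" "Suc (n - 2) < n" using n3 by auto
  have wk: "R\<^sup>*\<^sup>* (fst (v 1)) (fst (v (n - 1)))" using walk[OF n2(2)] unfolding n2(1) .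
  have a1: "fst (v 1) \<in> S" using v1 by auto
  have ga: "EG (fst w) (fst (v 1))" using e1 by blast
  have bg: "EG (fst (v (n - 1))) (fst w)" using e2 by blast
  show False by (rule cycle_from_path[OF cvx g a1 ne ga bg wk[unfolded R_def]])
qed

lemma cycle_swap:
  assumes "cycle_in (box_edge EG EH) A xs"
  shows "cycle_in (box_edge EH EG) (prod.swap ` A) (map prod.swap xs)"
proof -
  have "distinct xs" "length xs \<ge> 3" "set xs \<subseteq> A"
    "\<forall>i < length xs. box_edge EG EH (xs ! i) (xs ! ((i + 1) mod length xs))"
    using assms unfolding cycle_in_def by auto
  moreover have "box_edge EH EG (prod.swap p) (prod.swap q) = box_edge EG EH p q" for p q
    unfolding box_edge_def by auto
  moreover have "(Suc i mod length xs) < length xs" for i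
    using \<open>length xs \<ge> 3\<close> mod_less_divisor[of "length xs" "Suc i"] by linarith
  ultimately show ?thesis unfolding cycle_in_def
    by (simp add: distinct_map image_mono)
qed

theorem mainTheorem4:
  fixes VG :: "'a set" and EG :: "'a \<Rightarrow> 'a \<Rightarrow> bool"
    and VH :: "'b set" and EH :: "'b \<Rightarrow> 'b \<Rightarrow> bool"
    and S :: "'a set" and T :: "'b set"
  assumes "simple_graph VG EG" and "simple_graph VH EH"
    and "connected_graph VG EG" and "connected_graph VH EH"
    and "nontrivial_graph VG" and "nontrivial_graph VH"
    and "S \<subseteq> VG" and "T \<subseteq> VH"
    and "cycle_convex VG EG S" and "cycle_convex VH EH T"
  shows "cycle_convex (box_vertices VG VH) (box_edge EG EH) (S \<times> T)"
proof -
  have "False" if w: "w \<in> VG \<times> VH - S \<times> T" and xs: "cycle_in (box_edge EG EH) (S \<times> T \<union> {w}) xs"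
    and win: "w \<in> set xs" for w xs
  proof (cases "fst w \<in> S")
    case False
    show False using core[OF assms(9) _ False xs win] w by auto
  next
    case True
    hence ns: "snd w \<notin> T" using w by auto
    have c2: "cycle_in (box_edge EH EG) (T \<times> S \<union> {prod.swap w}) (map prod.swap xs)"
      using cycle_swap[OF xs] by (simp add: image_Un product_swap)
    have h1: "fst (prod.swap w) \<in> VH" using w by auto
    have h2: "fst (prod.swap w) \<notin> T" using ns by simp
    have h3: "prod.swap w \<in> set (map prod.swap xs)" using win by simp
    show False by (rule core[OF assms(10) h1 h2 c2 h3])
  qed
  hence "{w \<in> VG \<times> VH - S \<times> T. \<exists>xs. cycle_in (box_edge EG EH) (S \<times> T \<union> {w}) xs \<and> w \<in> set xs} = {}"
    by blast
  thus ?thesis unfolding cycle_convex_def cycle_interval_def box_vertices_def by (simp only: Un_empty_right)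
qed

end
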